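(* Let $L\in\mathbb{C}^{\delta\times\delta}$ be a nonzero complex symmetric matrix with $\pi(L)=0$. Then there is a family of matrices $S(\epsilon)\in O(\delta,\mathbb{C})$, $\epsilon\ge 0$, with $S(0)=I$, such that the matrices $\hat L(\epsilon):=S(\epsilon)LS(\epsilon)^{-1}$ satisfy $\pi(\hat L(\epsilon))=0$ and $d\theta^{\hat L(\epsilon)}_I$ is surjective onto $V$ for all $\epsilon\in(0,\pi/2)$.
   Context: $\pi(A)=(a_{11},\dots,a_{\delta\delta})$ denotes the vector of diagonal entries of a $\delta\times\delta$ matrix $A$. $O(\delta,\mathbb{C})=\{S\in\mathbb{C}^{\delta\times\delta}: SS^t=I\}$, $so(\delta,\mathbb{C})=\{X: X+X^t=0\}$, $V=\{x\in\mathbb{C}^\delta:\sum_i x_i=0\}$. For a symmetric matrix $M$, $d\theta^M_I:so(\delta,\mathbb{C})\to V$ is the linear map $X\mapsto\pi(XM-MX)$ (the derivative at $I$ of $S\mapsto\pi(SMS^{-1})$ on $O(\delta,\mathbb{C})$). *)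

theory Defs
  imports "HOL-Analysis.Analysis"
begin

text \<open>Matrices in C^{delta x delta} are modelled as complex ^'n ^'n, delta = CARD('n).\<close>

definition diag_vec :: "complex^'n^'n \<Rightarrow> complex^'n" where
  "diag_vec A = (\<chi> i. A $ i $ i)"

definition orth_group :: "(complex^'n^'n) set" where
  "orth_group = {S. S ** transpose S = mat 1}"

definition so_alg :: "(complex^'n^'n) set" where
  "so_alg = {X. X + transpose X = 0}"

definition V_space :: "(complex^'n) set" where
  "V_space = {x. (\<Sum>i\<in>UNIV. x $ i) = 0}"

definition dtheta :: "complex^'n^'n \<Rightarrow> complex^'n^'n \<Rightarrow> complex^'n" where
  "dtheta M X = diag_vec (X ** M - M ** X)"

end

theory Submission
  imports Defs
begin

definition rowop :: "'n \<Rightarrow> 'n \<Rightarrow> 'n \<Rightarrow> ('n \<Rightarrow> complex) \<Rightarrow> complex" where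
  "rowop i j a f = (if a = i then 3/5 * f i - 4/5 * f j else if a = j then 4/5 * f i + 3/5 * f j else f a)"

definition rot :: "'n \<Rightarrow> 'n \<Rightarrow> complex^'n^'n" where
  "rot i j = (\<chi> a b. if a = i then (if b = i then 3/5 else if b = j then -4/5 else 0)
      else if a = j then (if b = i then 4/5 else if b = j then 3/5 else 0)
      else (if b = a then 1 else 0))"

lemma rot_row:
  assumes "i \<noteq> j"
  shows "(\<Sum>k\<in>UNIV. rot i j $ a $ k * f k) = rowop i j a f"
proof -
  have "rot i j $ a $ k * f k =
     (if k = i then (if a = i then 3/5 else if a = j then 4/5 else 0) * f i else 0)
   + (if k = j then (if a = i then -4/5 else if a = j then 3/5 else 0) * f j else 0)
   + (if k = a \<and> a \<noteq> i \<and> a \<noteq> j then f a else 0)" for k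
    using assms unfolding rot_def by auto
  then have "(\<Sum>k\<in>UNIV. rot i j $ a $ k * f k) =
     (\<Sum>k\<in>UNIV. (if k = i then (if a = i then 3/5 else if a = j then 4/5 else 0) * f i else 0)
   + (if k = j then (if a = i then -4/5 else if a = j then 3/5 else 0) * f j else 0)
   + (if k = a \<and> a \<noteq> i \<and> a \<noteq> j then f a else 0))" by simp
  also have "\<dots> = rowop i j a f"
    unfolding sum.distrib using assms by (simp add: rowop_def)
  finally show ?thesis .
qed

lemma conj_entry:
  assumes "i \<noteq> j"
  shows "(rot i j ** M ** transpose (rot i j)) $ a $ b = rowop i j b (\<lambda>l. rowop i j a (\<lambda>k. M$k$l))"
proof -
  have 1: "(rot i j ** M) $ a $ l = rowop i j a (\<lambda>k. M$k$l)" for l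
    by (simp add: matrix_matrix_mult_def rot_row[OF assms])
  show ?thesis
    by (simp add: matrix_matrix_mult_def[of "rot i j ** M"] transpose_def 1 mult.commute[of "rowop i j a _"] rot_row[OF assms])
qed

lemma rot_orth:
  assumes "i \<noteq> j"
  shows "rot i j ** transpose (rot i j) = mat 1"
proof -
  have "(rot i j ** transpose (rot i j)) $ a $ b = mat 1 $ a $ b" for a b
  proof -
    have "(rot i j ** transpose (rot i j)) $ a $ b = rowop i j a (\<lambda>k. rot i j $ b $ k)"
      by (simp add: matrix_matrix_mult_def transpose_def rot_row[OF assms])
    also have "\<dots> = mat 1 $ a $ b"
      using assms by (auto simp add: mat_def rowop_def rot_def)
    finally show ?thesis .
  qed
  then show ?thesis by (simp add: vec_eq_iff)
qed

definition reach :: "complex^'n^'n \<Rightarrow> 'n \<Rightarrow> 'n \<Rightarrow> bool" where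
  "reach M = (\<lambda>k l. M$k$l \<noteq> 0)\<^sup>*\<^sup>*"

lemma reach_step: "reach M a k \<Longrightarrow> M$k$l \<noteq> 0 \<Longrightarrow> reach M a l"
  unfolding reach_def by (simp add: rtranclp.rtrancl_into_rtrancl)

lemma sym_entry:
  assumes "transpose M = M" shows "M$a$b = M$b$a"
proof -
  have "transpose M $ a $ b = M$b$a" by (simp add: transpose_def)
  then show ?thesis using assms by simp
qed

lemma step_lemma:
  assumes sym: "transpose M = M" and diag: "\<forall>a. M$a$a = 0" and nb: "M$i0$l0 \<noteq> 0"
    and nr: "\<not> reach M i0 j"
  defines "M' \<equiv> rot i0 j ** M ** transpose (rot i0 j)"
  shows "transpose M' = M'" "\<forall>a. M'$a$a = 0" "M'$i0$l0 \<noteq> 0"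
    "\<forall>k. reach M i0 k \<longrightarrow> reach M' i0 k" "reach M' i0 j"
proof -
  have ij: "i0 \<noteq> j" using nr unfolding reach_def by auto
  have symM: "M$a$b = M$b$a" for a b
    using sym_entry[OF sym] .
  have z1: "M$j$k = 0" if "reach M i0 k" for k
  proof (rule ccontr)
    assume "M$j$k \<noteq> 0"
    then have "M$k$j \<noteq> 0" using symM by metis
    then show False using reach_step[OF that] nr by blast
  qed
  have z2: "M$k$j = 0" if "reach M i0 k" for k using z1[OF that] symM by metis
  have r0: "reach M i0 i0" unfolding reach_def by simp
  have rl0: "reach M i0 l0" using reach_step[OF r0 nb] .
  have l0i: "l0 \<noteq> i0" using nb diag by auto
  have l0j: "l0 \<noteq> j" using rl0 nr by auto
  have E: "M'$a$b = rowop i0 j b (\<lambda>l. rowop i0 j a (\<lambda>k. M$k$l))" for a b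
    unfolding M'_def by (rule conj_entry[OF ij])
  show symM': "transpose M' = M'"
    unfolding M'_def by (simp add: matrix_transpose_mul sym matrix_mul_assoc)
  show "\<forall>a. M'$a$a = 0"
    using diag ij z1[OF r0] z2[OF r0] by (simp add: E rowop_def symM[of j i0])
  show nb': "M'$i0$l0 \<noteq> 0"
    using nb ij l0i l0j z1[OF rl0] by (simp add: E rowop_def)
  show "\<forall>k. reach M i0 k \<longrightarrow> reach M' i0 k"
  proof (intro allI impI)
    fix k assume "reach M i0 k"
    then show "reach M' i0 k" unfolding reach_def
    proof (induction rule: rtranclp_induct)
      case base then show ?case by simp
    next
      case (step k l)
      have rk: "reach M i0 k" using step(1) unfolding reach_def .
      have rl: "reach M i0 l" using reach_step[OF rk step(2)] .
      have kj: "k \<noteq> j" using rk nr by auto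
      have lj: "l \<noteq> j" using rl nr by auto
      have kl: "k \<noteq> l" using step(2) diag by auto
      have "M'$k$l \<noteq> 0"
        using step(2) ij kj lj kl z1[OF rl] z2[OF rk] by (auto simp add: E rowop_def)
      then show ?case using step(3) by (simp add: rtranclp.rtrancl_into_rtrancl)
    qed
  qed
  then have "reach M' i0 l0" using rl0 by blast
  moreover have "M'$l0$j \<noteq> 0"
    using nb ij l0i l0j z2[OF rl0] symM[of l0 i0] by (simp add: E rowop_def)
  ultimately show "reach M' i0 j" by (rule reach_step)
qed

lemma orth_mult:
  assumes "A ** transpose A = mat 1" "B ** transpose B = mat 1"
  shows "(A ** B) ** transpose (A ** B) = (mat 1 :: complex^'n^'n)"
proof -
  have "(A ** B) ** transpose (A ** B) = A ** (B ** transpose B) ** transpose A"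
    by (simp add: matrix_transpose_mul matrix_mul_assoc)
  then show ?thesis using assms by simp
qed

lemma main_ind:
  "\<forall>M :: complex^'n^'n. transpose M = M \<longrightarrow> (\<forall>a. M$a$a = 0) \<longrightarrow> M$i0$l0 \<noteq> 0 \<longrightarrow>
    card {k. \<not> reach M i0 k} = m \<longrightarrow>
    (\<exists>S. S ** transpose S = mat 1 \<and> transpose (S ** M ** transpose S) = S ** M ** transpose S
       \<and> (\<forall>a. (S ** M ** transpose S)$a$a = 0) \<and> (\<forall>k. reach (S ** M ** transpose S) i0 k))"
proof (induction m rule: less_induct)
  case (less m)
  show ?case
  proof (intro allI impI)
    fix M :: "complex^'n^'n"
    assume sym: "transpose M = M" and diag: "\<forall>a. M$a$a = 0" and nb: "M$i0$l0 \<noteq> 0"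
      and cm: "card {k. \<not> reach M i0 k} = m"
    show "\<exists>S. S ** transpose S = mat 1 \<and> transpose (S ** M ** transpose S) = S ** M ** transpose S
       \<and> (\<forall>a. (S ** M ** transpose S)$a$a = 0) \<and> (\<forall>k. reach (S ** M ** transpose S) i0 k)"
    proof (cases "\<forall>k. reach M i0 k")
      case True
      then show ?thesis using sym diag by (intro exI[of _ "mat 1"]) simp
    next
      case False
      then obtain j where nr: "\<not> reach M i0 j" by blast
      have ij: "i0 \<noteq> j" using nr unfolding reach_def by auto
      define M' where "M' = rot i0 j ** M ** transpose (rot i0 j)"
      note st = step_lemma[OF sym diag nb nr, folded M'_def]
      have sub: "{k. \<not> reach M' i0 k} \<subset> {k. \<not> reach M i0 k}"
        using st(4,5) nr by blast
      have lt: "card {k. \<not> reach M' i0 k} < m"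
        using psubset_card_mono[OF _ sub] cm by simp
      obtain S' where S': "S' ** transpose S' = mat 1" "transpose (S' ** M' ** transpose S') = S' ** M' ** transpose S'"
        "\<forall>a. (S' ** M' ** transpose S')$a$a = 0" "\<forall>k. reach (S' ** M' ** transpose S') i0 k"
        using less[OF lt] st(1,2,3) by blast
      have eq: "(S' ** rot i0 j) ** M ** transpose (S' ** rot i0 j) = S' ** M' ** transpose S'"
        unfolding M'_def by (simp add: matrix_transpose_mul matrix_mul_assoc)
      show ?thesis
        apply (rule exI[of _ "S' ** rot i0 j"])
        using S' orth_mult[OF S'(1) rot_orth[OF ij]] unfolding eq by simp
    qed
  qed
qed

definition ev :: "'n \<Rightarrow> complex^'n" where "ev k = (\<chi> a. if a = k then 1 else 0)"

definition Xm :: "'n \<Rightarrow> 'n \<Rightarrow> complex^'n^'n" where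
  "Xm l k = (\<chi> a b. if a = l \<and> b = k then 1 else if a = k \<and> b = l then -1 else 0)"

definition msc :: "complex \<Rightarrow> complex^'n^'n \<Rightarrow> complex^'n^'n" where
  "msc z X = (\<chi> a b. z * X$a$b)"

lemma dtheta_entry: "dtheta M X $ a = (\<Sum>k\<in>UNIV. X$a$k * M$k$a - M$a$k * X$k$a)"
  by (simp add: dtheta_def diag_vec_def matrix_matrix_mult_def sum_subtractf)

lemma so_alg_iff: "X \<in> so_alg \<longleftrightarrow> (\<forall>a b. X$b$a = - X$a$b)"
  unfolding so_alg_def by (auto simp: vec_eq_iff transpose_def eq_neg_iff_add_eq_0 add.commute)

lemma dtheta_add: "dtheta M (X + Y) = dtheta M X + dtheta M Y"
  by (simp add: vec_eq_iff dtheta_entry sum.distrib[symmetric] algebra_simps)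

lemma dtheta_msc: "dtheta M (msc z X) = z *s dtheta M X"
  by (simp add: vec_eq_iff dtheta_entry msc_def sum_distrib_left algebra_simps)

lemma dtheta_Xm:
  assumes "l \<noteq> k" "transpose M = M"
  shows "dtheta M (Xm l k) = (2 * M$l$k) *s (ev l - ev k)"
proof -
  have "dtheta M (Xm l k) $ a = ((2 * M$l$k) *s (ev l - ev k)) $ a" for a
  proof -
    have "Xm l k $ a $ b * M$b$a - M$a$b * Xm l k $ b $ a =
      (if b = k then (if a = l then M$k$l else 0) else 0) + (if b = l then (if a = k then - M$l$k else 0) else 0)
      - ((if b = l then (if a = k then M$k$l else 0) else 0) + (if b = k then (if a = l then - M$l$k else 0) else 0))" for b
      using assms(1) by (auto simp: Xm_def)
    then have "dtheta M (Xm l k) $ a = (\<Sum>b\<in>UNIV. (if b = k then (if a = l then M$k$l else 0) else 0) + (if b = l then (if a = k then - M$l$k else 0) else 0)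
      - ((if b = l then (if a = k then M$k$l else 0) else 0) + (if b = k then (if a = l then - M$l$k else 0) else 0)))"
      by (simp add: dtheta_entry)
    also have "\<dots> = ((2 * M$l$k) *s (ev l - ev k)) $ a"
      using assms(1) sym_entry[OF assms(2), of k l]
      by (simp add: sum_subtractf sum.distrib ev_def)
    finally show ?thesis .
  qed
  then show ?thesis by (simp add: vec_eq_iff)
qed

lemma surj_lemma:
  fixes M :: "complex^'n^'n"
  assumes sym: "transpose M = M" and diag: "\<forall>a. M$a$a = 0" and ra: "\<forall>k. reach M i0 k"
  shows "dtheta M ` so_alg = V_space"
proof
  show "dtheta M ` so_alg \<subseteq> V_space"
  proof
    fix w assume "w \<in> dtheta M ` so_alg"
    then obtain X where w: "w = dtheta M X" by blast
    have "(\<Sum>a\<in>UNIV. \<Sum>k\<in>UNIV. M$a$k * X$k$a) = (\<Sum>k\<in>UNIV. \<Sum>a\<in>UNIV. M$a$k * X$k$a)"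
      by (rule sum.swap)
    then have "(\<Sum>a\<in>UNIV. w $ a) = 0"
      unfolding w by (simp add: dtheta_entry sum_subtractf mult.commute)
    then show "w \<in> V_space" by (simp add: V_space_def)
  qed
next
  let ?T = "dtheta M ` so_alg"
  have z: "0 \<in> ?T"
  proof
    show "0 \<in> so_alg" by (simp add: so_alg_iff)
    show "0 = dtheta M 0" by (simp add: vec_eq_iff dtheta_entry)
  qed
  have add: "u + w \<in> ?T" if uT: "u \<in> ?T" and wT: "w \<in> ?T" for u w
  proof -
    obtain X where X: "X \<in> so_alg" "u = dtheta M X" using uT by (rule imageE) simp
    obtain Y where Y: "Y \<in> so_alg" "w = dtheta M Y" using wT by (rule imageE) simp
    have "X + Y \<in> so_alg" unfolding so_alg_iff
    proof (intro allI)
      fix a b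
      have "X$b$a = - X$a$b" "Y$b$a = - Y$a$b" using X(1) Y(1) unfolding so_alg_iff by blast+
      then show "(X + Y)$b$a = - (X + Y)$a$b" by simp
    qed
    moreover have "u + w = dtheta M (X + Y)" using X(2) Y(2) by (simp add: dtheta_add)
    ultimately show ?thesis by (rule rev_image_eqI)
  qed
  have sc: "z *s u \<in> ?T" if uT: "u \<in> ?T" for u z
  proof -
    obtain X where X: "X \<in> so_alg" "u = dtheta M X" using uT by (rule imageE) simp
    have "msc z X \<in> so_alg" unfolding so_alg_iff
    proof (intro allI)
      fix a b
      have "X$b$a = - X$a$b" using X(1) unfolding so_alg_iff by blast
      then show "msc z X$b$a = - msc z X$a$b" by (simp add: msc_def)
    qed
    moreover have "z *s u = dtheta M (msc z X)" using X(2) by (simp add: dtheta_msc)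
    ultimately show ?thesis by (rule rev_image_eqI)
  qed
  have basis: "ev k - ev i0 \<in> ?T" if "reach M i0 k" for k
    using that unfolding reach_def
  proof (induction rule: rtranclp_induct)
    case base then show ?case using z by simp
  next
    case (step k l)
    have lk: "l \<noteq> k" using step(2) diag by auto
    have mlk: "M$l$k \<noteq> 0" using step(2) sym_entry[OF sym, of k l] by simp
    have "Xm l k \<in> so_alg" using lk by (auto simp: so_alg_iff Xm_def)
    then have "dtheta M (Xm l k) \<in> ?T" by blast
    then have "(1 / (2 * M$l$k)) *s dtheta M (Xm l k) \<in> ?T" by (rule sc)
    also have "(1 / (2 * M$l$k)) *s dtheta M (Xm l k) = ev l - ev k"
      using mlk by (simp add: dtheta_Xm[OF lk sym] vec_eq_iff)
    finally have "(ev l - ev k) + (ev k - ev i0) \<in> ?T" using add step(3) by blast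
    then show ?case by simp
  qed
  have sums: "finite F \<Longrightarrow> (\<forall>k\<in>F. f k \<in> ?T) \<Longrightarrow> sum f F \<in> ?T" for F and f :: "'n \<Rightarrow> complex^'n"
    by (induction F rule: finite_induct) (auto intro: z add)
  show "V_space \<subseteq> ?T"
  proof
    fix v :: "complex^'n" assume "v \<in> V_space"
    then have sv: "(\<Sum>i\<in>UNIV. v $ i) = 0" by (simp add: V_space_def)
    have "v = (\<Sum>k\<in>UNIV. v$k *s (ev k - ev i0))"
    proof -
      have "(\<Sum>k\<in>UNIV. v$k *s (ev k - ev i0)) $ a = v $ a" for a
      proof -
        have "(\<Sum>k\<in>UNIV. v$k *s (ev k - ev i0)) $ a =
          (\<Sum>k\<in>UNIV. (if k = a then v$a else 0)) - (if a = i0 then (\<Sum>k\<in>UNIV. v$k) else 0)"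
          by (simp add: ev_def right_diff_distrib sum_subtractf mult.commute[of "v$_"] if_distrib[of "\<lambda>t. t * v$_"] eq_commute[of a] cong: if_cong)
        then show ?thesis using sv by simp
      qed
      then show ?thesis by (simp add: vec_eq_iff)
    qed
    also have "\<dots> \<in> ?T"
    proof (rule sums)
      show "\<forall>k\<in>UNIV. v$k *s (ev k - ev i0) \<in> ?T" using sc basis ra by blast
    qed simp
    finally show "v \<in> ?T" .
  qed
qed

lemma orth_inv:
  fixes S :: "complex^'n^'n"
  assumes "S ** transpose S = mat 1"
  shows "matrix_inv S = transpose S"
proof -
  have t: "transpose S ** S = mat 1" using assms matrix_left_right_inverse by blast
  have ex: "S ** transpose S = mat 1 \<and> transpose S ** S = mat 1" using assms t by simp
  let ?A = "matrix_inv S"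
  have A: "S ** ?A = mat 1 \<and> ?A ** S = mat 1"
    unfolding matrix_inv_def by (rule someI[where P="\<lambda>A'. S ** A' = mat 1 \<and> A' ** S = mat 1", OF ex])
  have "?A = (transpose S ** S) ** ?A" using t by simp
  also have "\<dots> = transpose S ** (S ** ?A)" by (simp add: matrix_mul_assoc)
  also have "\<dots> = transpose S" using A by simp
  finally show ?thesis .
qed

theorem lemma1:
  fixes L :: "complex^'n^'n"
  assumes "transpose L = L" and "L \<noteq> 0" and "diag_vec L = 0"
  shows "\<exists>S :: real \<Rightarrow> complex^'n^'n.
           (\<forall>\<epsilon>\<ge>0. S \<epsilon> \<in> orth_group) \<and> S 0 = mat 1 \<and>
           (\<forall>\<epsilon>. 0 < \<epsilon> \<and> \<epsilon> < pi / 2 \<longrightarrow>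
              (let Lh = S \<epsilon> ** L ** matrix_inv (S \<epsilon>) in
                 diag_vec Lh = 0 \<and> dtheta Lh ` so_alg = V_space))"
proof -
  obtain i0 l0 where nb: "L$i0$l0 \<noteq> 0" using assms(2) by (auto simp: vec_eq_iff)
  have diag: "\<forall>a. L$a$a = 0" using assms(3) by (simp add: vec_eq_iff diag_vec_def)
  obtain S where S: "S ** transpose S = mat 1" "transpose (S ** L ** transpose S) = S ** L ** transpose S"
       "\<forall>a. (S ** L ** transpose S)$a$a = 0" "\<forall>k. reach (S ** L ** transpose S) i0 k"
    using main_ind[of i0 l0 "card {k. \<not> reach L i0 k}"] assms(1) diag nb by blast
  have inv: "matrix_inv S = transpose S" by (rule orth_inv[OF S(1)])
  have good: "diag_vec (S ** L ** matrix_inv S) = 0 \<and> dtheta (S ** L ** matrix_inv S) ` so_alg = V_space"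
    unfolding inv using S(3) surj_lemma[OF S(2) S(3) S(4)] by (simp add: vec_eq_iff diag_vec_def)
  show ?thesis
    apply (rule exI[of _ "\<lambda>e. if e = 0 then mat 1 else S"])
    using S(1) good by (auto simp: orth_group_def Let_def)
qed

end
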